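(* Let $X$ be a compact $\ell_1$-convex subset of $\mathbb{R}^n$. Then for $0\le j\le k\le n$, \[ \int_{\mathrm{Graff}_{n,k}} V_j(X\cap A)\,dA=\binom{n+j-k}{j}V_{n+j-k}(X). \] In particular, for $0\le k\le n$, the set $\{A\in\mathrm{Graff}_{n,k}: X\cap A\neq\emptyset\}$ has measure $V_{n-k}(X)$.
   Context: A subset $X\subseteq\mathbb{R}^n$ is $\ell_1$-convex if any two of its points $x,x'$ are joined by a map $\gamma\colon[0,D]\to X$, $D=\sum_i|x_i-x'_i|$, with $\gamma(0)=x,\gamma(D)=x'$ and $\sum_i|\gamma_i(t)-\gamma_i(t')|=|t-t'|$. $G_{n,k}$ is the set of $k$-dimensional coordinate subspaces of $\mathbb{R}^n$ (spanned by $k$ standard basis vectors); $P^\perp$ is the orthogonal complement and $\pi_P$ orthogonal projection. $\mathrm{Graff}_{n,k}$ is the set of $k$-dimensional affine subspaces parallel to some element of $G_{n,k}$; each is uniquely $P+q$ with $P\in G_{n,k}$, $q\in P^\perp$, so $\mathrm{Graff}_{n,k}\cong\coprod_{P\in G_{n,k}}P^\perp$, and it carries the measure obtained by summing Lebesgue measure $\mathrm{Vol}_{n-k}$ on each $P^\perp$. The $i$th $\ell_1$-intrinsic volume of a compact $\ell_1$-convex set $Y$ lying in $\mathbb{R}^n$ is $V_i(Y)=\sum_{P\in G_{n,i}}\mathrm{Vol}_i(\pi_PY)$; for $Y\subseteq A$ with $A$ an affine coordinate-parallel subspace, $V_i(Y)$ is computed in $\mathbb{R}^n$ (this agrees with computing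 intrinsically in $A$). For sets $X\cap A$ not necessarily $\ell_1$-convex the integrand is understood via this same formula. *)

theory Defs
  imports "HOL-Analysis.Analysis" "HOL-Probability.Probability"
begin

text \<open>Points of R^n are vectors of type real^'n with n = CARD('n).
  A k-dimensional coordinate subspace P in G_{n,k} is identified with the set S of
  the k coordinate indices spanning it.\<close>

definition l1dist :: "real^'n \<Rightarrow> real^'n \<Rightarrow> real" where
  "l1dist x y = (\<Sum>i\<in>UNIV. \<bar>x$i - y$i\<bar>)"

definition l1_convex :: "(real^'n) set \<Rightarrow> bool" where
  "l1_convex X \<longleftrightarrow> (\<forall>x\<in>X. \<forall>x'\<in>X. \<exists>\<gamma> :: real \<Rightarrow> real^'n.
      \<gamma> 0 = x \<and> \<gamma> (l1dist x x') = x' \<and>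
      (\<forall>t\<in>{0..l1dist x x'}. \<gamma> t \<in> X) \<and>
      (\<forall>t\<in>{0..l1dist x x'}. \<forall>t'\<in>{0..l1dist x x'}. l1dist (\<gamma> t) (\<gamma> t') = \<bar>t - t'\<bar>))"

text \<open>Orthogonal projection onto the coordinate subspace spanned by the coordinates in S,
  expressed in the coordinates of that subspace (an element of R^S).\<close>
definition coord_proj :: "'n set \<Rightarrow> real^'n \<Rightarrow> ('n \<Rightarrow> real)" where
  "coord_proj S x = restrict (\<lambda>i. x$i) S"

abbreviation lebesgue_on_coords :: "'n set \<Rightarrow> ('n \<Rightarrow> real) measure" where
  "lebesgue_on_coords S \<equiv> PiM S (\<lambda>_. lborel)"

definition l1_intrinsic_volume :: "nat \<Rightarrow> (real^'n::finite) set \<Rightarrow> ennreal" where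
  "l1_intrinsic_volume i Y =
     (\<Sum>S\<in>{S :: 'n set. card S = i}. emeasure (lebesgue_on_coords S) (coord_proj S ` Y))"

text \<open>The affine flat P + q, where P is spanned by the coordinates in S and
  q in P^perp is given by its coordinates outside S.\<close>
definition coord_flat :: "'n set \<Rightarrow> ('n \<Rightarrow> real) \<Rightarrow> (real^'n) set" where
  "coord_flat S q = {x. \<forall>i\<in>-S. x$i = q i}"

text \<open>Integral over Graff_{n,k} = disjoint union over P in G_{n,k} of P^perp,
  each with Lebesgue measure Vol_{n-k}.\<close>
definition graff_integral :: "nat \<Rightarrow> ((real^'n::finite) set \<Rightarrow> ennreal) \<Rightarrow> ennreal" where
  "graff_integral k f =
     (\<Sum>S\<in>{S :: 'n set. card S = k}. \<integral>\<^sup>+ q. f (coord_flat S q) \<partial>(lebesgue_on_coords (-S)))"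

definition graff_measure :: "nat \<Rightarrow> (real^'n::finite) set set \<Rightarrow> ennreal" where
  "graff_measure k \<A> = graff_integral k (indicator \<A>)"

end

theory Submission
  imports Defs
begin

lemma proj_measurable:
  fixes K :: "(real^'n) set"
  assumes "compact K"
  shows "coord_proj S ` K \<in> sets (lebesgue_on_coords S)"
proof -
  define E :: "('n \<Rightarrow> real) \<Rightarrow> real^'n" where "E = (\<lambda>y. \<chi> i. if i \<in> S then y i else 0)"
  define P :: "real^'n \<Rightarrow> real^'n" where "P = (\<lambda>x. \<chi> i. if i \<in> S then x$i else 0)"
  have cP: "continuous_on UNIV P" unfolding P_def
    by (intro continuous_on_vec_lambda, case_tac "i \<in> S") (auto intro: continuous_on_component)
  have "compact (P ` K)" using assms cP compact_continuous_image continuous_on_subset by blast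
  hence C: "P ` K \<in> sets borel" by (simp add: compact_imp_closed)
  have EM: "E \<in> borel_measurable (lebesgue_on_coords S)"
  proof (subst borel_measurable_euclidean_space, intro ballI)
    fix b :: "real^'n" assume "b \<in> Basis"
    then obtain i where b: "b = axis i 1" by (auto simp: Basis_vec_def)
    have "(\<lambda>x. E x \<bullet> b) = (\<lambda>x. if i \<in> S then x i else 0)"
      by (auto simp: b E_def inner_axis)
    then show "(\<lambda>x. E x \<bullet> b) \<in> borel_measurable (lebesgue_on_coords S)"
      by (cases "i \<in> S") auto
  qed
  have eq: "coord_proj S ` K = E -` (P ` K) \<inter> space (lebesgue_on_coords S)"
  proof safe
    fix x assume "x \<in> K"
    show "coord_proj S x \<in> E -` P ` K"
      using \<open>x \<in> K\<close> by (auto simp: E_def P_def coord_proj_def intro!: image_eqI[where x=x] ext)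
    show "coord_proj S x \<in> space (lebesgue_on_coords S)"
      by (auto simp: space_PiM coord_proj_def)
  next
    fix y x assume y: "y \<in> space (lebesgue_on_coords S)" and x: "x \<in> K" and e: "E y = P x"
    have "y = coord_proj S x"
    proof
      fix i show "y i = coord_proj S x i"
      proof (cases "i \<in> S")
        case True
        then have "E y $ i = P x $ i" using e by simp
        then show ?thesis using True by (simp add: E_def P_def coord_proj_def)
      next
        case False then show ?thesis using y by (auto simp: space_PiM coord_proj_def PiE_def extensional_def)
      qed
    qed
    then show "y \<in> coord_proj S ` K" using x by blast
  qed
  show ?thesis unfolding eq using EM C by (rule measurable_sets)
qed

lemma sf_PiM: "sigma_finite_measure (lebesgue_on_coords (I::'n::finite set))"
proof -
  interpret finite_product_sigma_finite "\<lambda>_. lborel" I by standard auto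
  show ?thesis by (rule sigma_finite_measure_axioms)
qed

lemma null_proj:
  fixes X :: "(real^'n) set"
  assumes "i \<in> T" "i \<notin> S"
  shows "emeasure (lebesgue_on_coords T) (coord_proj T ` (X \<inter> coord_flat S q)) = 0"
proof -
  interpret product_sigma_finite "\<lambda>_. lborel" by standard
  define A where "A = (\<lambda>j. if j = i then {q i} else (UNIV::real set))"
  have sub: "coord_proj T ` (X \<inter> coord_flat S q) \<subseteq> PiE T A"
    using assms by (auto simp: coord_proj_def coord_flat_def A_def)
  have "emeasure (lebesgue_on_coords T) (PiE T A) = (\<Prod>j\<in>T. emeasure lborel (A j))"
    by (rule emeasure_PiM) (auto simp: A_def)
  also have "\<dots> = 0" using assms by (intro prod_zero) (auto simp: A_def)
  finally have z: "emeasure (lebesgue_on_coords T) (PiE T A) = 0" .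
  have "PiE T A \<in> sets (lebesgue_on_coords T)"
    by (intro sets_PiM_I_finite) (auto simp: A_def)
  then show ?thesis using emeasure_mono[OF sub] z by (metis le_zero_eq)
qed

lemma section_set:
  fixes X :: "(real^'n) set"
  assumes "T \<subseteq> S" and q: "q \<in> space (lebesgue_on_coords (-S))"
  shows "Pair q -` (merge (-S) T -` coord_proj (-S \<union> T) ` X \<inter> space (lebesgue_on_coords (-S) \<Otimes>\<^sub>M lebesgue_on_coords T))
          = coord_proj T ` (X \<inter> coord_flat S q)"
proof (intro equalityI subsetI)
  have dis: "-S \<inter> T = {}" using assms by auto
  fix y assume y0: "y \<in> Pair q -` (merge (-S) T -` coord_proj (-S \<union> T) ` X \<inter> space (lebesgue_on_coords (-S) \<Otimes>\<^sub>M lebesgue_on_coords T))"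
  then obtain x where x: "x \<in> X" "merge (-S) T (q, y) = coord_proj (-S \<union> T) x"
    by auto
  have ysp: "y \<in> space (lebesgue_on_coords T)" using y0 q by (simp add: space_pair_measure)
  have "\<forall>i\<in>-S. x$i = q i"
  proof
    fix i assume i: "i \<in> -S"
    have "merge (-S) T (q, y) i = coord_proj (-S \<union> T) x i" using x by simp
    then show "x$i = q i" using i dis by (simp add: coord_proj_def)
  qed
  then have xf: "x \<in> X \<inter> coord_flat S q" using x by (simp add: coord_flat_def)
  have "y = coord_proj T x"
  proof
    fix i show "y i = coord_proj T x i"
    proof (cases "i \<in> T")
      case True
      have "merge (-S) T (q, y) i = coord_proj (-S \<union> T) x i" using x by simp
      then show ?thesis using True dis by (simp add: coord_proj_def)
    next
      case False then show ?thesis using ysp by (auto simp: space_PiM coord_proj_def PiE_def extensional_def)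
    qed
  qed
  then show "y \<in> coord_proj T ` (X \<inter> coord_flat S q)" using xf by blast
next
  have dis: "-S \<inter> T = {}" using assms by auto
  fix z assume "z \<in> coord_proj T ` (X \<inter> coord_flat S q)"
  then obtain x where z: "z = coord_proj T x" and x: "x \<in> X" "x \<in> coord_flat S q" by blast
  have "merge (-S) T (q, coord_proj T x) = coord_proj (-S \<union> T) x"
  proof
    fix i show "merge (-S) T (q, coord_proj T x) i = coord_proj (-S \<union> T) x i"
      using x(2) q dis by (auto simp: merge_def coord_proj_def coord_flat_def space_PiM PiE_def extensional_def)
  qed
  then have "merge (-S) T (q, coord_proj T x) \<in> coord_proj (-S \<union> T) ` X" using x by auto
  moreover have "(q, coord_proj T x) \<in> space (lebesgue_on_coords (-S) \<Otimes>\<^sub>M lebesgue_on_coords T)"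
    using q by (auto simp: space_pair_measure space_PiM coord_proj_def)
  ultimately show "z \<in> Pair q -` (merge (-S) T -` coord_proj (-S \<union> T) ` X \<inter> space (lebesgue_on_coords (-S) \<Otimes>\<^sub>M lebesgue_on_coords T))"
    using z by simp
qed

lemma section_proj:
  fixes X :: "(real^'n) set"
  assumes "compact X" "T \<subseteq> S"
  shows "(\<lambda>q. emeasure (lebesgue_on_coords T) (coord_proj T ` (X \<inter> coord_flat S q))) \<in> borel_measurable (lebesgue_on_coords (-S))"
    and "emeasure (lebesgue_on_coords (-S \<union> T)) (coord_proj (-S \<union> T) ` X)
       = (\<integral>\<^sup>+ q. emeasure (lebesgue_on_coords T) (coord_proj T ` (X \<inter> coord_flat S q)) \<partial>lebesgue_on_coords (-S))"
proof -
  interpret product_sigma_finite "\<lambda>_. lborel" by standard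
  interpret M: sigma_finite_measure "lebesgue_on_coords T" by (rule sf_PiM)
  define B where "B = coord_proj (-S \<union> T) ` X"
  define Q where "Q = merge (-S) T -` B \<inter> space (lebesgue_on_coords (-S) \<Otimes>\<^sub>M lebesgue_on_coords T)"
  have dis: "-S \<inter> T = {}" using assms by auto
  have Bm: "B \<in> sets (lebesgue_on_coords (-S \<union> T))" unfolding B_def using assms(1) by (rule proj_measurable)
  have mm: "merge (-S) T \<in> measurable (lebesgue_on_coords (-S) \<Otimes>\<^sub>M lebesgue_on_coords T) (lebesgue_on_coords (-S \<union> T))"
    by (rule measurable_merge)
  have Qm: "Q \<in> sets (lebesgue_on_coords (-S) \<Otimes>\<^sub>M lebesgue_on_coords T)"
    unfolding Q_def using mm Bm by (rule measurable_sets)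
  have sec: "\<And>q. q \<in> space (lebesgue_on_coords (-S)) \<Longrightarrow> emeasure (lebesgue_on_coords T) (Pair q -` Q)
      = emeasure (lebesgue_on_coords T) (coord_proj T ` (X \<inter> coord_flat S q))"
    unfolding Q_def B_def using section_set[OF assms(2)] by simp
  have "(\<lambda>q. emeasure (lebesgue_on_coords T) (Pair q -` Q)) \<in> borel_measurable (lebesgue_on_coords (-S))"
    using Qm by (rule M.measurable_emeasure_Pair)
  then show "(\<lambda>q. emeasure (lebesgue_on_coords T) (coord_proj T ` (X \<inter> coord_flat S q))) \<in> borel_measurable (lebesgue_on_coords (-S))"
    using sec measurable_cong by (metis (no_types, lifting))
  have "emeasure (lebesgue_on_coords (-S \<union> T)) B
      = emeasure (distr (lebesgue_on_coords (-S) \<Otimes>\<^sub>M lebesgue_on_coords T) (lebesgue_on_coords (-S \<union> T)) (merge (-S) T)) B"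
    by (subst distr_merge[OF dis]) auto
  also have "\<dots> = emeasure (lebesgue_on_coords (-S) \<Otimes>\<^sub>M lebesgue_on_coords T) Q"
    unfolding Q_def using mm Bm by (rule emeasure_distr)
  also have "\<dots> = (\<integral>\<^sup>+ q. emeasure (lebesgue_on_coords T) (Pair q -` Q) \<partial>lebesgue_on_coords (-S))"
    using Qm by (rule M.emeasure_pair_measure_alt)
  also have "\<dots> = (\<integral>\<^sup>+ q. emeasure (lebesgue_on_coords T) (coord_proj T ` (X \<inter> coord_flat S q)) \<partial>lebesgue_on_coords (-S))"
    by (intro nn_integral_cong sec)
  finally show "emeasure (lebesgue_on_coords (-S \<union> T)) (coord_proj (-S \<union> T) ` X)
       = (\<integral>\<^sup>+ q. emeasure (lebesgue_on_coords T) (coord_proj T ` (X \<inter> coord_flat S q)) \<partial>lebesgue_on_coords (-S))"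
    by (simp add: B_def)
qed

lemma card_Compl: "card (- (A::'n::finite set)) = CARD('n) - card A"
  by (metis Compl_eq_Diff_UNIV card_Diff_subset finite subset_UNIV)

lemma double_count:
  fixes f :: "'n::finite set \<Rightarrow> ennreal"
  assumes jk: "j \<le> k" "k \<le> CARD('n)"
  shows "(\<Sum>S\<in>{S. card S = k}. \<Sum>T\<in>{T. card T = j \<and> T \<subseteq> S}. f (-S \<union> T))
       = of_nat ((CARD('n) + j - k) choose j) * (\<Sum>U\<in>{U. card U = CARD('n) + j - k}. f U)"
proof -
  let ?n = "CARD('n)"
  have "(\<Sum>S\<in>{S. card S = k}. \<Sum>T\<in>{T. card T = j \<and> T \<subseteq> S}. f (-S \<union> T))
      = (\<Sum>p\<in>Sigma {S. card S = k} (\<lambda>S. {T. card T = j \<and> T \<subseteq> S}). f (-fst p \<union> snd p))"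
    by (subst sum.Sigma) (auto intro!: sum.cong simp: split_beta)
  also have "\<dots> = (\<Sum>p\<in>Sigma {U. card U = ?n + j - k} (\<lambda>U. {W. W \<subseteq> U \<and> card W = ?n - k}). f (fst p))"
  proof (rule sum.reindex_bij_witness[where i="\<lambda>(U::'n set,W::'n set). (-W, U - W)" and j="\<lambda>(S::'n set,T::'n set). (-S \<union> T, -S)"])
    fix p :: "'n set \<times> 'n set" assume p: "p \<in> Sigma {U. card U = ?n + j - k} (\<lambda>U. {W. W \<subseteq> U \<and> card W = ?n - k})"
    obtain U W where pw: "p = (U, W)" by (cases p)
    have WU: "W \<subseteq> U" "card U = ?n + j - k" "card W = ?n - k" using p pw by auto
    show "(case case p of (U, W) \<Rightarrow> (- W, U - W) of (S, T) \<Rightarrow> (- S \<union> T, - S)) = p"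
      using WU pw by auto
    have "card (-W) = k" using WU jk card_Compl[of W] by simp
    moreover have "card (U - W) = j" using WU jk by (simp add: card_Diff_subset)
    ultimately show "(case p of (U, W) \<Rightarrow> (- W, U - W)) \<in> Sigma {S. card S = k} (\<lambda>S. {T. card T = j \<and> T \<subseteq> S})"
      using pw by auto
  next
    fix p :: "'n set \<times> 'n set" assume p: "p \<in> Sigma {S. card S = k} (\<lambda>S. {T. card T = j \<and> T \<subseteq> S})"
    obtain S T where pw: "p = (S, T)" by (cases p)
    have ST: "T \<subseteq> S" "card S = k" "card T = j" using p pw by auto
    show "(case case p of (S, T) \<Rightarrow> (- S \<union> T, - S) of (U, W) \<Rightarrow> (- W, U - W)) = p"
      using ST pw by auto
    have cS: "card (-S) = ?n - k" using ST card_Compl[of S] by simp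
    have "card (-S \<union> T) = card (-S) + card T"
      using ST by (intro card_Un_disjoint) auto
    then have "card (-S \<union> T) = ?n + j - k" using cS ST jk by simp
    then show "(case p of (S, T) \<Rightarrow> (- S \<union> T, - S)) \<in> Sigma {U. card U = ?n + j - k} (\<lambda>U. {W. W \<subseteq> U \<and> card W = ?n - k})"
      using pw cS by auto
    show "f (fst (case p of (S, T) \<Rightarrow> (- S \<union> T, - S))) = f (- fst p \<union> snd p)"
      using pw by simp
  qed
  also have "\<dots> = (\<Sum>U\<in>{U. card U = ?n + j - k}. \<Sum>W\<in>{W. W \<subseteq> U \<and> card W = ?n - k}. f U)"
    by (subst sum.Sigma) (auto intro!: sum.cong simp: split_beta)
  also have "\<dots> = (\<Sum>U\<in>{U. card U = ?n + j - k}. of_nat ((?n + j - k) choose j) * f U)"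
  proof (rule sum.cong[OF refl])
    fix U :: "'n set" assume U: "U \<in> {U. card U = ?n + j - k}"
    have "card {W. W \<subseteq> U \<and> card W = ?n - k} = (?n + j - k) choose (?n - k)"
      using U by (simp add: n_subsets)
    also have "\<dots> = (?n + j - k) choose j"
      using jk by (metis binomial_symmetric diff_add_inverse le_add_diff_inverse2 le_diff_iff' le_add1 add_diff_cancel_left' Nat.add_diff_assoc2 add.commute)
    finally show "(\<Sum>W\<in>{W. W \<subseteq> U \<and> card W = ?n - k}. f U) = of_nat ((?n + j - k) choose j) * f U"
      by simp
  qed
  also have "\<dots> = of_nat ((?n + j - k) choose j) * (\<Sum>U\<in>{U. card U = ?n + j - k}. f U)"
    by (simp add: sum_distrib_left)
  finally show ?thesis .
qed

theorem theorem7p1: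
  fixes X :: "(real^'n) set"
  assumes "compact X" and "l1_convex X"
  shows "(\<forall>j k. j \<le> k \<and> k \<le> CARD('n) \<longrightarrow>
            graff_integral k (\<lambda>A. l1_intrinsic_volume j (X \<inter> A))
              = of_nat ((CARD('n) + j - k) choose j) * l1_intrinsic_volume (CARD('n) + j - k) X)
       \<and> (\<forall>k. k \<le> CARD('n) \<longrightarrow>
            graff_measure k {A. X \<inter> A \<noteq> {}} = l1_intrinsic_volume (CARD('n) - k) X)"
proof (intro conjI allI impI)
  fix j k assume jk: "j \<le> k \<and> k \<le> CARD('n)"
  define m where "m = (\<lambda>S T q. emeasure (lebesgue_on_coords T) (coord_proj T ` (X \<inter> coord_flat S (q::'n \<Rightarrow> real))))"
  have step: "(\<integral>\<^sup>+ q. l1_intrinsic_volume j (X \<inter> coord_flat S q) \<partial>lebesgue_on_coords (-S))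
      = (\<Sum>T\<in>{T. card T = j \<and> T \<subseteq> S}. emeasure (lebesgue_on_coords (-S \<union> T)) (coord_proj (-S \<union> T) ` X))"
    for S :: "'n set"
  proof -
    have "(\<integral>\<^sup>+ q. l1_intrinsic_volume j (X \<inter> coord_flat S q) \<partial>lebesgue_on_coords (-S))
        = (\<integral>\<^sup>+ q. (\<Sum>T\<in>{T. card T = j \<and> T \<subseteq> S}. m S T q) \<partial>lebesgue_on_coords (-S))"
    proof (rule nn_integral_cong)
      fix q
      have "l1_intrinsic_volume j (X \<inter> coord_flat S q) = (\<Sum>T\<in>{T. card T = j}. m S T q)"
        by (simp add: l1_intrinsic_volume_def m_def)
      also have "\<dots> = (\<Sum>T\<in>{T. card T = j \<and> T \<subseteq> S}. m S T q)"
      proof (rule sum.mono_neutral_right)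
        show "\<forall>T\<in>{T. card T = j} - {T. card T = j \<and> T \<subseteq> S}. m S T q = 0"
        proof
          fix T assume "T \<in> {T. card T = j} - {T. card T = j \<and> T \<subseteq> S}"
          then obtain i where "i \<in> T" "i \<notin> S" by auto
          then show "m S T q = 0" unfolding m_def by (rule null_proj)
        qed
      qed auto
      finally show "l1_intrinsic_volume j (X \<inter> coord_flat S q) = (\<Sum>T\<in>{T. card T = j \<and> T \<subseteq> S}. m S T q)" .
    qed
    also have "\<dots> = (\<Sum>T\<in>{T. card T = j \<and> T \<subseteq> S}. \<integral>\<^sup>+ q. m S T q \<partial>lebesgue_on_coords (-S))"
      by (rule nn_integral_sum) (auto simp: m_def intro: section_proj(1)[OF assms(1)])
    also have "\<dots> = (\<Sum>T\<in>{T. card T = j \<and> T \<subseteq> S}. emeasure (lebesgue_on_coords (-S \<union> T)) (coord_proj (-S \<union> T) ` X))"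
      by (rule sum.cong[OF refl]) (auto simp: m_def section_proj(2)[OF assms(1)])
    finally show ?thesis .
  qed
  have "graff_integral k (\<lambda>A. l1_intrinsic_volume j (X \<inter> A))
      = (\<Sum>S\<in>{S. card S = k}. \<Sum>T\<in>{T. card T = j \<and> T \<subseteq> S}. emeasure (lebesgue_on_coords (-S \<union> T)) (coord_proj (-S \<union> T) ` X))"
    unfolding graff_integral_def by (rule sum.cong[OF refl]) (rule step)
  also have "\<dots> = of_nat ((CARD('n) + j - k) choose j) * l1_intrinsic_volume (CARD('n) + j - k) X"
    unfolding l1_intrinsic_volume_def using jk
    by (intro double_count[where f="\<lambda>U. emeasure (lebesgue_on_coords U) (coord_proj U ` X)"]) auto
  finally show "graff_integral k (\<lambda>A. l1_intrinsic_volume j (X \<inter> A))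
              = of_nat ((CARD('n) + j - k) choose j) * l1_intrinsic_volume (CARD('n) + j - k) X" .
next
  fix k assume k: "k \<le> CARD('n)"
  have step: "(\<integral>\<^sup>+ q. indicator {A. X \<inter> A \<noteq> {}} (coord_flat S q) \<partial>lebesgue_on_coords (-S))
      = emeasure (lebesgue_on_coords (-S)) (coord_proj (-S) ` X)" for S :: "'n set"
  proof -
    have "(\<integral>\<^sup>+ q. indicator {A. X \<inter> A \<noteq> {}} (coord_flat S q) \<partial>lebesgue_on_coords (-S))
        = (\<integral>\<^sup>+ q. indicator (coord_proj (-S) ` X) q \<partial>lebesgue_on_coords (-S))"
    proof (rule nn_integral_cong)
      fix q assume q: "q \<in> space (lebesgue_on_coords (-S))"
      have "(X \<inter> coord_flat S q \<noteq> {}) = (q \<in> coord_proj (-S) ` X)"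
      proof
        assume "X \<inter> coord_flat S q \<noteq> {}"
        then obtain x where x: "x \<in> X" "x \<in> coord_flat S q" by blast
        have "q = coord_proj (-S) x"
        proof
          fix i show "q i = coord_proj (-S) x i"
            using x(2) q by (cases "i \<in> S") (auto simp: coord_flat_def coord_proj_def space_PiM PiE_def extensional_def)
        qed
        then show "q \<in> coord_proj (-S) ` X" using x by blast
      next
        assume "q \<in> coord_proj (-S) ` X"
        then obtain x where "x \<in> X" "q = coord_proj (-S) x" by blast
        then have "x \<in> X \<inter> coord_flat S q" by (auto simp: coord_flat_def coord_proj_def)
        then show "X \<inter> coord_flat S q \<noteq> {}" by blast
      qed
      then show "indicator {A. X \<inter> A \<noteq> {}} (coord_flat S q) = (indicator (coord_proj (-S) ` X) q :: ennreal)"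
        by (simp add: indicator_def)
    qed
    also have "\<dots> = emeasure (lebesgue_on_coords (-S)) (coord_proj (-S) ` X)"
      using proj_measurable[OF assms(1)] by (rule nn_integral_indicator)
    finally show ?thesis .
  qed
  have "graff_measure k {A. X \<inter> A \<noteq> {}} = (\<Sum>S\<in>{S. card S = k}. emeasure (lebesgue_on_coords (-S)) (coord_proj (-S) ` X))"
    unfolding graff_measure_def graff_integral_def by (rule sum.cong[OF refl]) (rule step)
  also have "\<dots> = l1_intrinsic_volume (CARD('n) - k) X"
    unfolding l1_intrinsic_volume_def
  proof (rule sum.reindex_bij_witness[where i="uminus" and j="uminus"])
    fix S :: "'n set" assume "S \<in> {S. card S = k}"
    then show "- S \<in> {S. card S = CARD('n) - k}" using card_Compl[of S] by simp
  next
    fix S :: "'n set" assume "S \<in> {S. card S = CARD('n) - k}"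
    then show "- S \<in> {S. card S = k}" using card_Compl[of S] k by simp
  qed auto
  finally show "graff_measure k {A. X \<inter> A \<noteq> {}} = l1_intrinsic_volume (CARD('n) - k) X" .
qed

end
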